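(* Let $E$ be a countable directed graph satisfying the standing assumptions (1)–(4) of the context, let $S=V_{x_E}$, let $\mathcal S$ be the set of sources of $E_S$, and let $\beta<0$. Then the orbit $[x_E]$ is $\beta$-summable if and only if $$\lim_{n\to\infty}\sum_{\mu\in\mathcal SE^*v_n}e^{\beta(n-|\mu|)}<\infty,$$ where $\mathcal SE^*v_n=\{\mu\in E^*:s(\mu)\in\mathcal S,\ r(\mu)=v_n\}$ (the sequence is eventually nondecreasing, so the limit exists in $[0,\infty]$).
   Context: Directed graph conventions: paths $\mu=\mu_0\cdots\mu_{n-1}$ with $r(\mu_i)=s(\mu_{i+1})$, $|\mu|$ the length, vertices as paths of length $0$, $vE^*w$ paths from $v$ to $w$, $E^\infty$ infinite paths, $vE^1$ edges with source $v$. A source is a vertex receiving no edges. For $S\subseteq E^0$, $E_S$ has vertex set $S$ and edges with source and range in $S$. For $x=x_0x_1\cdots\in E^\infty$: $V_x=\{v\in E^0: vE^*s(x_n)\neq\emptyset\text{ for some }n\}$, $W_x=\{s(x_j):j\ge0\}$. Standing assumptions: (1) there is a fixed $x_E=x_0x_1\cdots\in E^\infty$ with $v_0:=s(x_0)$ a source; write $v_i=s(x_i)$; (2) with $S=V_{x_E}$, $|vE_S^1|<\infty$ for all $v\in S$; (3) $E_S$ has no nontrivial cycles; (4) $V_{x_E}\setminus W_{x_E}$ is finite. The orbit of $x\in E^\infty$ is $[x]=\{y\in E^\infty:\exists n,m\ge0,\ y_{i+m}=x_{i+n}\ \forall i\}$. If $x$ is not eventually periodic, for $y\in[x]$ written $y=\mu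 z$, $x=\nu z$ ($\mu,\nu$ finite, $z\in E^\infty$) set $l_x(y)=e^{-(|\mu|-|\nu|)}$; $[x]$ is $\beta$-summable if $x$ is not eventually periodic and $\sum_{y\in[x]}l_x(y)^\beta<\infty$. *)

theory Defs
  imports "HOL-Analysis.Analysis" "HOL-Library.Countable"
begin

text \<open>A directed graph is given by a vertex type 'v, an edge type 'e and the
source and range maps s r :: 'e => 'v (all vertices / edges of the types are
vertices / edges of the graph). A finite path is a pair (u, es) where u is its
source vertex and es its list of edges; vertices are the paths (u, []) of
length 0.\<close>

definition is_fpath :: "('e \<Rightarrow> 'v) \<Rightarrow> ('e \<Rightarrow> 'v) \<Rightarrow> 'v \<times> 'e list \<Rightarrow> bool" where
  "is_fpath s r \<mu> \<longleftrightarrow>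
     (case \<mu> of (u, es) \<Rightarrow>
        (es \<noteq> [] \<longrightarrow> s (hd es) = u) \<and>
        (\<forall>i. Suc i < length es \<longrightarrow> r (es ! i) = s (es ! Suc i)))"

definition fsrc :: "'v \<times> 'e list \<Rightarrow> 'v" where
  "fsrc \<mu> = fst \<mu>"

definition frng :: "('e \<Rightarrow> 'v) \<Rightarrow> 'v \<times> 'e list \<Rightarrow> 'v" where
  "frng r \<mu> = (if snd \<mu> = [] then fst \<mu> else r (last (snd \<mu>)))"

definition flen :: "'v \<times> 'e list \<Rightarrow> nat" where
  "flen \<mu> = length (snd \<mu>)"

definition paths_between :: "('e \<Rightarrow> 'v) \<Rightarrow> ('e \<Rightarrow> 'v) \<Rightarrow> 'v \<Rightarrow> 'v \<Rightarrow> ('v \<times> 'e list) set" where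
  "paths_between s r v w = {\<mu>. is_fpath s r \<mu> \<and> fsrc \<mu> = v \<and> frng r \<mu> = w}"

definition is_ipath :: "('e \<Rightarrow> 'v) \<Rightarrow> ('e \<Rightarrow> 'v) \<Rightarrow> (nat \<Rightarrow> 'e) \<Rightarrow> bool" where
  "is_ipath s r x \<longleftrightarrow> (\<forall>i. r (x i) = s (x (Suc i)))"

definition is_source :: "('e \<Rightarrow> 'v) \<Rightarrow> 'v \<Rightarrow> bool" where
  "is_source r v \<longleftrightarrow> (\<forall>e. r e \<noteq> v)"

definition Vx :: "('e \<Rightarrow> 'v) \<Rightarrow> ('e \<Rightarrow> 'v) \<Rightarrow> (nat \<Rightarrow> 'e) \<Rightarrow> 'v set" where
  "Vx s r x = {v. \<exists>n. paths_between s r v (s (x n)) \<noteq> {}}"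

definition Wx :: "('e \<Rightarrow> 'v) \<Rightarrow> (nat \<Rightarrow> 'e) \<Rightarrow> 'v set" where
  "Wx s x = {s (x j) | j. True}"

definition sub_edges :: "('e \<Rightarrow> 'v) \<Rightarrow> ('e \<Rightarrow> 'v) \<Rightarrow> 'v set \<Rightarrow> 'e set" where
  "sub_edges s r S = {e. s e \<in> S \<and> r e \<in> S}"

definition no_cycles_in :: "('e \<Rightarrow> 'v) \<Rightarrow> ('e \<Rightarrow> 'v) \<Rightarrow> 'v set \<Rightarrow> bool" where
  "no_cycles_in s r S \<longleftrightarrow>
     (\<forall>\<mu>. is_fpath s r \<mu> \<and> fsrc \<mu> \<in> S \<and> set (snd \<mu>) \<subseteq> sub_edges s r S \<and> flen \<mu> > 0
          \<longrightarrow> frng r \<mu> \<noteq> fsrc \<mu>)"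

definition sources_sub :: "('e \<Rightarrow> 'v) \<Rightarrow> ('e \<Rightarrow> 'v) \<Rightarrow> 'v set \<Rightarrow> 'v set" where
  "sources_sub s r S = {v \<in> S. \<forall>e \<in> sub_edges s r S. r e \<noteq> v}"

definition orbit :: "('e \<Rightarrow> 'v) \<Rightarrow> ('e \<Rightarrow> 'v) \<Rightarrow> (nat \<Rightarrow> 'e) \<Rightarrow> (nat \<Rightarrow> 'e) set" where
  "orbit s r x = {y. is_ipath s r y \<and> (\<exists>n m. \<forall>i. y (i + m) = x (i + n))}"

definition eventually_periodic :: "(nat \<Rightarrow> 'e) \<Rightarrow> bool" where
  "eventually_periodic x \<longleftrightarrow> (\<exists>p N. p > 0 \<and> (\<forall>i\<ge>N. x (i + p) = x i))"

text \<open>l_x(y) = e^{-(|\<mu>|-|\<nu>|)} where y = \<mu> z, x = \<nu> z, i.e. y shifted by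
|\<mu>| equals x shifted by |\<nu>|.\<close>
definition lx :: "(nat \<Rightarrow> 'e) \<Rightarrow> (nat \<Rightarrow> 'e) \<Rightarrow> real" where
  "lx x y = (THE c. \<exists>n m. (\<forall>i. y (i + m) = x (i + n)) \<and> c = exp (- (real m - real n)))"

definition beta_summable :: "('e \<Rightarrow> 'v) \<Rightarrow> ('e \<Rightarrow> 'v) \<Rightarrow> real \<Rightarrow> (nat \<Rightarrow> 'e) \<Rightarrow> bool" where
  "beta_summable s r \<beta> x \<longleftrightarrow>
     \<not> eventually_periodic x \<and> (\<lambda>y. lx x y powr \<beta>) summable_on orbit s r x"

end

theory Submission
  imports Defs
begin


lemma fp_Nil[simp]: "is_fpath s r (u, [])" by (simp add: is_fpath_def)

lemma fp_Cons: "is_fpath s r (u, e#es) \<longleftrightarrow> s e = u \<and> is_fpath s r (r e, es)"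
  unfolding is_fpath_def
  by (cases es) (auto simp: nth_Cons split: nat.splits)

lemma frng_Nil[simp]: "frng r (u,[]) = u" by (simp add: frng_def)
lemma frng_Cons[simp]: "frng r (u, e#es) = frng r (r e, es)" by (simp add: frng_def)

lemma fp_append: "is_fpath s r (u, es@es') \<longleftrightarrow> is_fpath s r (u,es) \<and> is_fpath s r (frng r (u,es), es')"
  by (induction es arbitrary: u) (auto simp: fp_Cons)

lemma frng_append: "frng r (u, es@es') = frng r (frng r (u,es), es')"
  by (induction es arbitrary: u) auto

lemma ens[simp]: "(f::'a\<Rightarrow>ennreal) summable_on S" by (rule nonneg_summable_on_complete) simp

locale gr =
  fixes s r :: "'e \<Rightarrow> 'v" and x :: "nat \<Rightarrow> 'e" and \<beta> :: real
  assumes ipath: "is_ipath s r x"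
    and acyc: "no_cycles_in s r (Vx s r x)"
    and fin_diff: "finite (Vx s r x - Wx s x)"
    and beta_neg: "\<beta> < 0"
begin

abbreviation "S \<equiv> Vx s r x"
definition "v n = s (x n)"
definition "reach u w \<longleftrightarrow> (\<exists>es. is_fpath s r (u,es) \<and> frng r (u,es) = w)"

lemma reach_refl: "reach u u"
  unfolding reach_def by (rule exI[of _ "[]"]) simp

lemma reach_trans: "reach u w \<Longrightarrow> reach w z \<Longrightarrow> reach u z"
  unfolding reach_def by (metis fp_append frng_append)

lemma S_iff: "u \<in> S \<longleftrightarrow> (\<exists>n. reach u (v n))"
  unfolding Vx_def paths_between_def fsrc_def reach_def v_def by auto

lemma x_path: "is_fpath s r (v i, map x [i..<i+k]) \<and> frng r (v i, map x [i..<i+k]) = v (i+k)"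
proof -
  have "is_fpath s r (v i, map x [i..<i+k])"
    unfolding is_fpath_def using ipath
    by (auto simp: v_def is_ipath_def hd_map nth_append)
  moreover have "frng r (v i, map x [i..<i+k]) = v (i+k)"
  proof (cases k)
    case 0 then show ?thesis by (simp add: frng_def)
  next
    case (Suc k') then show ?thesis using ipath
      by (simp add: frng_def v_def is_ipath_def last_map)
  qed
  ultimately show ?thesis by blast
qed

lemma reach_x: "i \<le> j \<Longrightarrow> reach (v i) (v j)"
  unfolding reach_def using x_path[of i "j-i"] by (metis le_add_diff_inverse)

lemma v_in_S: "v n \<in> S" using S_iff reach_refl by blast

lemma reach_S: "reach u w \<Longrightarrow> w \<in> S \<Longrightarrow> u \<in> S"
  using S_iff reach_trans by blast

lemma path_sub: "is_fpath s r (u,es) \<Longrightarrow> frng r (u,es) \<in> S \<Longrightarrow> set es \<subseteq> sub_edges s r S"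
proof (induction es arbitrary: u)
  case Nil then show ?case by simp
next
  case (Cons e es)
  have se: "s e = u" and p: "is_fpath s r (r e, es)" using Cons.prems by (auto simp: fp_Cons)
  have fr: "frng r (r e, es) \<in> S" using Cons.prems by simp
  have "r e \<in> S" using reach_S[OF _ fr] p unfolding reach_def by blast
  moreover have "u \<in> S" using reach_S[OF _ Cons.prems(2)] Cons.prems(1) unfolding reach_def by blast
  ultimately show ?case using Cons.IH[OF p fr] se by (auto simp: sub_edges_def)
qed

lemma no_cycle: "is_fpath s r (u,es) \<Longrightarrow> frng r (u,es) = u \<Longrightarrow> u \<in> S \<Longrightarrow> es = []"
  using acyc path_sub[of u es] unfolding no_cycles_in_def fsrc_def flen_def
  by (metis fst_conv length_greater_0_conv snd_conv)

lemma no_cycle2: "is_fpath s r (u,es) \<Longrightarrow> frng r (u,es) = w \<Longrightarrow> reach w u \<Longrightarrow> u \<in> S \<Longrightarrow> es = []"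
proof -
  assume a: "is_fpath s r (u,es)" "frng r (u,es) = w" "reach w u" "u \<in> S"
  then obtain es' where "is_fpath s r (w,es')" "frng r (w,es') = u" unfolding reach_def by blast
  then have "is_fpath s r (u,es@es')" "frng r (u,es@es') = u" using a by (auto simp: fp_append frng_append)
  then show "es = []" using no_cycle a(4) by blast
qed

lemma v_lt: "i < j \<Longrightarrow> v i \<noteq> v j"
proof
  assume ij: "i < j" and e: "v i = v j"
  have "map x [i..<i+(j-i)] = []"
    using no_cycle[of "v i" "map x [i..<i+(j-i)]"] x_path[of i "j-i"] e ij v_in_S by simp
  then show False using ij by simp
qed

lemma v_inj: "v i = v j \<Longrightarrow> i = j"
  using v_lt by (metis linorder_neqE_nat)

lemma not_evper: "\<not> eventually_periodic x"
proof
  assume "eventually_periodic x"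
  then obtain p N where "p > 0" "\<forall>i\<ge>N. x (i + p) = x i" unfolding eventually_periodic_def by blast
  then have "v (N+p) = v N" by (simp add: v_def)
  then show False using v_inj \<open>p>0\<close> by fastforce
qed

definition "anc w = {u. reach u w}"

lemma anc_finite: "w \<in> S \<Longrightarrow> finite (anc w)"
proof -
  assume "w \<in> S"
  then obtain N where wN: "reach w (v N)" using S_iff by blast
  have "anc w \<subseteq> (S - Wx s x) \<union> v ` {..N}"
  proof
    fix u assume "u \<in> anc w"
    then have uw: "reach u w" by (simp add: anc_def)
    then have uN: "reach u (v N)" using wN reach_trans by blast
    then have uS: "u \<in> S" using S_iff by blast
    show "u \<in> (S - Wx s x) \<union> v ` {..N}"
    proof (cases "u \<in> Wx s x")
      case True
      then obtain j where uj: "u = v j" by (auto simp: Wx_def v_def)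
      have "j \<le> N"
      proof (rule ccontr)
        assume "\<not> j \<le> N"
        then have "map x [N..<N+(j-N)] = []"
          using no_cycle2[of "v N" "map x [N..<N+(j-N)]" "v j"] x_path[of N "j-N"] uN uj v_in_S
          by simp
        then show False using \<open>\<not> j \<le> N\<close> by simp
      qed
      then show ?thesis using uj by auto
    qed (use uS in auto)
  qed
  moreover have "finite ((S - Wx s x) \<union> v ` {..N})" using fin_diff by simp
  ultimately show ?thesis by (rule finite_subset)
qed

lemma src_exists: "w \<in> S \<Longrightarrow> \<exists>u es. u \<in> sources_sub s r S \<and> is_fpath s r (u,es) \<and> frng r (u,es) = w"
proof (induction w rule: measure_induct_rule[where f="\<lambda>w. card (anc w)"])
  case (less w)
  show ?case
  proof (cases "w \<in> sources_sub s r S")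
    case True
    then show ?thesis by (intro exI[of _ w] exI[of _ "[]"]) simp
  next
    case False
    then obtain e where e: "e \<in> sub_edges s r S" "r e = w"
      using less.prems by (auto simp: sources_sub_def)
    define u where "u = s e"
    have uS: "u \<in> S" using e by (simp add: sub_edges_def u_def)
    have pe: "is_fpath s r (u,[e])" "frng r (u,[e]) = w" using e by (auto simp: fp_Cons u_def)
    have ruw: "reach u w" using pe unfolding reach_def by blast
    have sub: "anc u \<subseteq> anc w" using ruw reach_trans by (auto simp: anc_def)
    have "w \<notin> anc u" using no_cycle2[OF pe] uS by (auto simp: anc_def)
    moreover have "w \<in> anc w" by (simp add: anc_def reach_refl)
    ultimately have "anc u \<subset> anc w" using sub by blast
    then have "card (anc u) < card (anc w)" using anc_finite[OF less.prems] psubset_card_mono by blast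
    then obtain u0 es where u0: "u0 \<in> sources_sub s r S" "is_fpath s r (u0,es)" "frng r (u0,es) = u"
      using less.IH uS by blast
    then have "is_fpath s r (u0, es@[e])" "frng r (u0, es@[e]) = w"
      using pe by (auto simp: fp_append frng_append)
    then show ?thesis using u0(1) by blast
  qed
qed


definition "sfx \<mu> k = (frng r (fst \<mu>, take k (snd \<mu>)), drop k (snd \<mu>))"

lemma sfx_path: "is_fpath s r \<mu> \<Longrightarrow> is_fpath s r (sfx \<mu> k) \<and> frng r (sfx \<mu> k) = frng r \<mu>"
proof -
  assume p: "is_fpath s r \<mu>"
  obtain u es where m: "\<mu> = (u, es)" by fastforce
  have e: "es = take k es @ drop k es" by simp
  have "is_fpath s r (u, take k es @ drop k es)" "frng r (u, take k es @ drop k es) = frng r (u, es)"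
    using p m by simp_all
  then show ?thesis unfolding sfx_def m fp_append frng_append by simp
qed

definition "P n = {\<mu>. is_fpath s r \<mu> \<and> frng r \<mu> = v n}"
definition "SP n = {\<mu>. is_fpath s r \<mu> \<and> fsrc \<mu> \<in> sources_sub s r S \<and> frng r \<mu> = s (x n)}"
definition "wt n \<mu> = ennreal (exp (\<beta> * (real n - real (flen \<mu>))))"

lemma sfx_surj: "\<mu> \<in> P n \<Longrightarrow> \<exists>\<nu> k. \<nu> \<in> SP n \<and> k \<le> flen \<nu> \<and> sfx \<nu> k = \<mu>"
proof -
  assume mP: "\<mu> \<in> P n"
  obtain w es where m: "\<mu> = (w, es)" by fastforce
  have p: "is_fpath s r (w,es)" "frng r (w,es) = v n" using mP m by (auto simp: P_def)
  then have "w \<in> S" using S_iff unfolding reach_def by blast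
  then obtain u \<rho> where u: "u \<in> sources_sub s r S" "is_fpath s r (u,\<rho>)" "frng r (u,\<rho>) = w"
    using src_exists by blast
  define \<nu> where "\<nu> = (u, \<rho> @ es)"
  have "\<nu> \<in> SP n" using u p unfolding \<nu>_def SP_def
    by (auto simp: fp_append frng_append fsrc_def v_def)
  moreover have "length \<rho> \<le> flen \<nu>" by (simp add: \<nu>_def flen_def)
  moreover have "sfx \<nu> (length \<rho>) = \<mu>" using u by (simp add: \<nu>_def sfx_def m)
  ultimately show ?thesis by blast
qed

lemma fin_le_infsum: "finite F \<Longrightarrow> F \<subseteq> A \<Longrightarrow> sum (f::_\<Rightarrow>ennreal) F \<le> infsum f A"
proof -
  assume a: "finite F" "F \<subseteq> A"
  have "infsum f F \<le> infsum f A" by (rule infsum_mono_neutral) (use a in auto)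
  then show ?thesis using a by simp
qed

definition "C = ennreal (1 / (1 - exp \<beta>))"

lemma geo: "(\<Sum>k\<le>L. exp (\<beta> * (a - real (L - k)))) \<le> exp (\<beta> * (a - real L)) * (1 / (1 - exp \<beta>))"
proof -
  have q: "exp \<beta> < 1" "0 < exp \<beta>" using beta_neg by auto
  have "(\<Sum>k\<le>L. exp (\<beta> * (a - real (L - k)))) = (\<Sum>k\<le>L. exp (\<beta> * (a - real L)) * exp \<beta> ^ k)"
  proof (rule sum.cong)
    fix k assume "k \<in> {..L}"
    then have "\<beta> * (a - real (L - k)) = \<beta> * (a - real L) + real k * \<beta>" by (simp add: of_nat_diff algebra_simps)
    then show "exp (\<beta> * (a - real (L - k))) = exp (\<beta> * (a - real L)) * exp \<beta> ^ k"
      by (simp add: exp_add exp_of_nat_mult)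
  qed simp
  also have "\<dots> = exp (\<beta> * (a - real L)) * (\<Sum>k<Suc L. exp \<beta> ^ k)"
    by (simp add: sum_distrib_left lessThan_Suc_atMost)
  also have "(\<Sum>k<Suc L. exp \<beta> ^ k) = (1 - exp \<beta> ^ Suc L) / (1 - exp \<beta>)"
    using q by (simp only: sum_gp_strict) simp
  also have "\<dots> \<le> 1 / (1 - exp \<beta>)"
    using q by (intro divide_right_mono) auto
  finally show ?thesis by (simp add: mult_left_mono)
qed

lemma g_le: "infsum (wt n) (P n) \<le> C * infsum (wt n) (SP n)"
proof (rule infsum_le_finite_sums)
  show "wt n summable_on P n" by simp
  fix F assume F: "finite F" "F \<subseteq> P n"
  define Q where "Q = (SIGMA \<nu>:SP n. {..flen \<nu>})"
  define h where "h = (\<lambda>(\<nu>, k). sfx \<nu> k)"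
  define gi where "gi = inv_into Q h"
  have PQ: "P n \<subseteq> h ` Q"
  proof
    fix \<mu> assume "\<mu> \<in> P n"
    then obtain \<nu> k where "\<nu> \<in> SP n" "k \<le> flen \<nu>" "sfx \<nu> k = \<mu>" using sfx_surj by blast
    then show "\<mu> \<in> h ` Q" unfolding Q_def h_def by (intro image_eqI[of _ _ "(\<nu>,k)"]) auto
  qed
  have inj: "inj_on gi F" unfolding gi_def using F PQ by (intro inj_on_inv_into) blast
  have giQ: "gi ` F \<subseteq> Q" unfolding gi_def using F PQ by (meson image_subsetI inv_into_into subsetD)
  have hgi: "\<And>\<mu>. \<mu> \<in> F \<Longrightarrow> h (gi \<mu>) = \<mu>" unfolding gi_def using F PQ by (meson f_inv_into_f subsetD)
  have "sum (wt n) F = sum (wt n \<circ> h) (gi ` F)"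
    using inj hgi by (simp add: sum.reindex)
  define N where "N = fst ` gi ` F"
  have Nfin: "finite N" using F by (simp add: N_def)
  have NSP: "N \<subseteq> SP n" using giQ by (auto simp: N_def Q_def)
  have sub: "gi ` F \<subseteq> (SIGMA \<nu>:N. {..flen \<nu>})" using giQ by (force simp: N_def Q_def)
  have "sum (wt n \<circ> h) (gi ` F) \<le> sum (wt n \<circ> h) (SIGMA \<nu>:N. {..flen \<nu>})"
    using sub Nfin by (intro sum_mono2) auto
  also have "\<dots> = (\<Sum>\<nu>\<in>N. \<Sum>k\<le>flen \<nu>. wt n (sfx \<nu> k))"
    using Nfin by (subst sum.Sigma) (auto simp: h_def split_def)
  also have "\<dots> \<le> (\<Sum>\<nu>\<in>N. C * wt n \<nu>)"
  proof (rule sum_mono)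
    fix \<nu> assume "\<nu> \<in> N"
    have "(\<Sum>k\<le>flen \<nu>. wt n (sfx \<nu> k)) = (\<Sum>k\<le>flen \<nu>. ennreal (exp (\<beta> * (real n - real (flen \<nu> - k)))))"
      by (simp add: wt_def sfx_def flen_def)
    also have "\<dots> = ennreal (\<Sum>k\<le>flen \<nu>. exp (\<beta> * (real n - real (flen \<nu> - k))))"
      by simp
    also have "\<dots> \<le> ennreal (exp (\<beta> * (real n - real (flen \<nu>))) * (1 / (1 - exp \<beta>)))"
      by (rule ennreal_leI, rule geo)
    also have "\<dots> = C * wt n \<nu>"
      unfolding C_def wt_def by (subst ennreal_mult''[symmetric]) (auto simp: mult.commute)
    finally show "(\<Sum>k\<le>flen \<nu>. wt n (sfx \<nu> k)) \<le> C * wt n \<nu>" .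
  qed
  also have "\<dots> = C * sum (wt n) N" by (simp add: sum_distrib_left)
  also have "\<dots> \<le> C * infsum (wt n) (SP n)"
    by (intro mult_left_mono fin_le_infsum Nfin NSP) simp
  finally show "sum (wt n) F \<le> C * infsum (wt n) (SP n)" using \<open>sum (wt n) F = _\<close> by simp
qed

lemma f_le_g: "infsum (wt n) (SP n) \<le> infsum (wt n) (P n)"
  by (rule infsum_mono_neutral) (auto simp: SP_def P_def v_def)

lemma f_mono: "infsum (wt n) (SP n) \<le> infsum (wt (Suc n)) (SP (Suc n))"
proof (rule infsum_le_finite_sums)
  show "wt n summable_on SP n" by simp
  fix F assume F: "finite F" "F \<subseteq> SP n"
  define ext where "ext = (\<lambda>\<mu>::'v \<times> 'e list. (fst \<mu>, snd \<mu> @ [x n]))"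
  have inj: "inj_on ext F" by (auto simp: ext_def inj_on_def prod_eq_iff)
  have "ext ` F \<subseteq> SP (Suc n)"
  proof
    fix \<nu> assume "\<nu> \<in> ext ` F"
    then obtain \<mu> where mu: "\<mu> \<in> SP n" "\<nu> = ext \<mu>" using F by blast
    obtain u es where m: "\<mu> = (u,es)" by fastforce
    show "\<nu> \<in> SP (Suc n)" using mu ipath unfolding m ext_def SP_def
      by (auto simp: fp_append frng_append fp_Cons fsrc_def is_ipath_def)
  qed
  moreover have "sum (wt n) F = sum (wt (Suc n)) (ext ` F)"
    using inj by (simp add: sum.reindex ext_def wt_def flen_def)
  ultimately show "sum (wt n) F \<le> infsum (wt (Suc n)) (SP (Suc n))"
    using F fin_le_infsum by (metis finite_imageI)
qed


definition "Y n = {y. is_ipath s r y \<and> (\<exists>m. \<forall>i. y (i+m) = x (i+n))}"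

lemma orbit_eq: "orbit s r x = (\<Union>n. Y n)"
  by (auto simp: orbit_def Y_def)

lemma Y_Suc: "Y n \<subseteq> Y (Suc n)"
proof
  fix y assume "y \<in> Y n"
  then obtain m where ip: "is_ipath s r y" and h: "\<forall>i. y (i+m) = x (i+n)" by (auto simp: Y_def)
  have "\<forall>i. y (i + Suc m) = x (i + Suc n)"
  proof
    fix i show "y (i + Suc m) = x (i + Suc n)" using h[rule_format, of "Suc i"] by simp
  qed
  then show "y \<in> Y (Suc n)" unfolding Y_def using ip by blast
qed

lemma Y_mono: "n \<le> n' \<Longrightarrow> Y n \<subseteq> Y n'"
  using Y_Suc by (rule lift_Suc_mono_le)

lemma fin_Y: "finite F \<Longrightarrow> F \<subseteq> (\<Union>n. Y n) \<Longrightarrow> \<exists>N. F \<subseteq> Y N"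
proof (induction F rule: finite_induct)
  case empty then show ?case by simp
next
  case (insert a F)
  then obtain N k where "F \<subseteq> Y N" "a \<in> Y k" by blast
  then have "insert a F \<subseteq> Y (max N k)" using Y_mono[of N "max N k"] Y_mono[of k "max N k"] by auto
  then show ?case by blast
qed

lemma shift_dir:
  assumes h1: "\<forall>i. y (i+m) = x (i+n)" and h2: "\<forall>i. y (i+m') = x (i+n')"
    and lt: "int n - int m > int n' - int m'"
  shows False
proof -
  define p where "p = nat ((int n - int m) - (int n' - int m'))"
  have pp: "p > 0" using lt by (simp add: p_def)
  have "\<forall>i\<ge>m+n'. x (i + p) = x i"
  proof (intro allI impI)
    fix i assume i: "i \<ge> m + n'"
    define j where "j = i + m' - n'"
    have e1: "(j - m') + m' = j" "(j - m') + n' = i" using i by (simp_all add: j_def)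
    have e2: "(j - m) + m = j" "(j - m) + n = i + p" using i lt by (simp_all add: j_def p_def)
    have "y j = x i" using h2[rule_format, of "j - m'"] e1 by simp
    moreover have "y j = x (i+p)" using h1[rule_format, of "j - m"] e2 by simp
    ultimately show "x (i + p) = x i" by simp
  qed
  then have "eventually_periodic x" using pp unfolding eventually_periodic_def by blast
  then show False using not_evper by blast
qed

lemma lx_eq:
  assumes h: "\<forall>i. y (i+m) = x (i+n)"
  shows "lx x y = exp (-(real m - real n))"
  unfolding lx_def
proof (rule the_equality)
  show "\<exists>n' m'. (\<forall>i. y (i+m') = x (i+n')) \<and> exp (-(real m - real n)) = exp (-(real m' - real n'))"
    using h by blast
next
  fix c assume "\<exists>n' m'. (\<forall>i. y (i+m') = x (i+n')) \<and> c = exp (-(real m' - real n'))"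
  then obtain n' m' where h2: "\<forall>i. y (i+m') = x (i+n')" and c: "c = exp (-(real m' - real n'))" by blast
  have "\<not> int n - int m > int n' - int m'" using shift_dir[OF h h2] by blast
  moreover have "\<not> int n' - int m' > int n - int m" using shift_dir[OF h2 h] by blast
  ultimately have "m + n' = m' + n" by linarith
  then have "real (m + n') = real (m' + n)" by simp
  then have "real m - real n = real m' - real n'" by simp
  then show "c = exp (-(real m - real n))" using c by simp
qed

lemma lxpow:
  assumes h: "\<forall>i. y (i+m) = x (i+n)"
  shows "lx x y powr \<beta> = exp (\<beta> * (real n - real m))"
  by (simp add: lx_eq[OF h] powr_def algebra_simps)

definition "phi n \<mu> = (\<lambda>i. if i < length (snd \<mu>) then snd \<mu> ! i else x (i - length (snd \<mu>) + n))"

lemma phi_shift: "phi n \<mu> (i + length (snd \<mu>)) = x (i + n)"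
  by (simp add: phi_def)

lemma phi_Y: "\<mu> \<in> P n \<Longrightarrow> phi n \<mu> \<in> Y n"
proof -
  assume mP: "\<mu> \<in> P n"
  obtain u es where m: "\<mu> = (u, es)" by fastforce
  have p: "is_fpath s r (u,es)" "frng r (u,es) = v n" using mP m by (auto simp: P_def)
  have "is_ipath s r (phi n \<mu>)"
    unfolding is_ipath_def
  proof
    fix i
    consider "Suc i < length es" | "Suc i = length es" | "Suc i > length es" by linarith
    then show "r (phi n \<mu> i) = s (phi n \<mu> (Suc i))"
    proof cases
      case 1 then show ?thesis using p(1) by (simp add: phi_def m is_fpath_def)
    next
      case 2
      then have ne: "es \<noteq> []" by auto
      have li: "length es - 1 = i" using 2 by simp
      have "last es = es ! i" using ne li by (simp add: last_conv_nth)
      then have "r (es ! i) = v n" using p(2) ne by (simp add: frng_def)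
      then show ?thesis using 2 by (simp add: phi_def m v_def)
    next
      case 3
      then have "Suc i - length es + n = Suc (i - length es + n)" by simp
      then show ?thesis using 3 ipath by (simp add: phi_def m is_ipath_def)
    qed
  qed
  moreover have "\<forall>i. phi n \<mu> (i + length (snd \<mu>)) = x (i+n)" by (simp add: phi_shift)
  ultimately show ?thesis unfolding Y_def by blast
qed

lemma phi_bij: "bij_betw (phi n) (P n) (Y n)"
  unfolding bij_betw_def
proof (intro conjI)
  show "inj_on (phi n) (P n)"
  proof (rule inj_onI)
    fix \<mu> \<mu>' assume mP: "\<mu> \<in> P n" "\<mu>' \<in> P n" and eq: "phi n \<mu> = phi n \<mu>'"
    obtain u es where m: "\<mu> = (u, es)" by fastforce
    obtain u' es' where m': "\<mu>' = (u', es')" by fastforce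
    have h1: "\<forall>i. phi n \<mu> (i + length es) = x (i+n)" using phi_shift m by (metis snd_conv)
    have h2: "\<forall>i. phi n \<mu> (i + length es') = x (i+n)" using phi_shift m' eq by (metis snd_conv)
    have "\<not> int n - int (length es) > int n - int (length es')" using shift_dir[OF h1 h2] by blast
    moreover have "\<not> int n - int (length es') > int n - int (length es)" using shift_dir[OF h2 h1] by blast
    ultimately have len: "length es = length es'" by linarith
    have "\<forall>i<length es. es ! i = es' ! i"
    proof (intro allI impI)
      fix i assume "i < length es"
      then show "es ! i = es' ! i" using fun_cong[OF eq, of i] len by (simp add: phi_def m m')
    qed
    then have ees: "es = es'" using len by (simp add: nth_equalityI)
    have "u = u'"
    proof (cases "es = []")
      case True then show ?thesis using mP ees by (simp add: P_def m m')
    next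
      case False then show ?thesis using mP ees by (auto simp: P_def m m' is_fpath_def)
    qed
    then show "\<mu> = \<mu>'" using ees m m' by simp
  qed
next
  show "phi n ` P n = Y n"
  proof
    show "phi n ` P n \<subseteq> Y n" using phi_Y by blast
  next
    show "Y n \<subseteq> phi n ` P n"
    proof
      fix y assume "y \<in> Y n"
      then obtain m where ip: "is_ipath s r y" and h: "\<forall>i. y (i+m) = x (i+n)" by (auto simp: Y_def)
      define \<mu> where "\<mu> = (if m = 0 then v n else s (y 0), map y [0..<m])"
      have fp: "is_fpath s r \<mu>" using ip
        by (auto simp: \<mu>_def is_fpath_def hd_map is_ipath_def)
      have "frng r \<mu> = v n"
      proof (cases m)
        case 0 then show ?thesis by (simp add: \<mu>_def frng_def)
      next
        case (Suc m')
        then have "r (y m') = s (y (0 + m))" using ip by (simp add: is_ipath_def)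
        then show ?thesis using Suc h[rule_format, of 0] by (simp add: \<mu>_def frng_def last_map v_def)
      qed
      then have "\<mu> \<in> P n" using fp by (simp add: P_def)
      moreover have "phi n \<mu> = y"
      proof
        fix i show "phi n \<mu> i = y i"
        proof (cases "i < m")
          case True then show ?thesis by (simp add: phi_def \<mu>_def)
        next
          case False
          then have "y i = x ((i - m) + n)" using h[rule_format, of "i - m"] by simp
          then show ?thesis using False by (simp add: phi_def \<mu>_def)
        qed
      qed
      ultimately show "y \<in> phi n ` P n" by blast
    qed
  qed
qed

lemma gY: "infsum (\<lambda>y. ennreal (lx x y powr \<beta>)) (Y n) = infsum (wt n) (P n)"
proof -
  have "infsum (\<lambda>\<mu>. ennreal (lx x (phi n \<mu>) powr \<beta>)) (P n) = infsum (\<lambda>y. ennreal (lx x y powr \<beta>)) (Y n)"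
    by (rule infsum_reindex_bij_betw[OF phi_bij])
  moreover have "infsum (\<lambda>\<mu>. ennreal (lx x (phi n \<mu>) powr \<beta>)) (P n) = infsum (wt n) (P n)"
  proof (rule infsum_cong)
    fix \<mu> assume "\<mu> \<in> P n"
    have "\<forall>i. phi n \<mu> (i + length (snd \<mu>)) = x (i+n)" by (simp add: phi_shift)
    then show "ennreal (lx x (phi n \<mu>) powr \<beta>) = wt n \<mu>"
      by (simp add: lxpow wt_def flen_def)
  qed
  ultimately show ?thesis by simp
qed

lemma main: "beta_summable s r \<beta> x \<longleftrightarrow>
   (\<exists>L. (\<lambda>n. infsum (wt n) (SP n)) \<longlonglongrightarrow> L \<and> L < \<infinity>)"
proof -
  define W where "W y = lx x y powr \<beta>" for y
  define G where "G = infsum (\<lambda>y. ennreal (W y)) (orbit s r x)"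
  define g where "g n = infsum (wt n) (P n)" for n
  define f where "f n = infsum (wt n) (SP n)" for n
  have gY': "g n = infsum (\<lambda>y. ennreal (W y)) (Y n)" for n using gY by (simp add: g_def W_def)
  have a: "W summable_on orbit s r x \<longleftrightarrow> G < \<infinity>"
  proof
    assume sm: "W summable_on orbit s r x"
    have "ennreal (infsum W (orbit s r x)) = (SUP F\<in>{F. finite F \<and> F \<subseteq> orbit s r x}. ennreal (sum W F))"
      by (rule infsum_nonneg_is_SUPREMUM_ennreal[OF sm]) (simp add: W_def)
    also have "\<dots> = G" unfolding G_def
      by (subst nonneg_infsum_complete) (auto simp: W_def intro!: SUP_cong)
    finally show "G < \<infinity>" by (metis ennreal_less_top infinity_ennreal_def)
  next
    assume G: "G < \<infinity>"
    show "W summable_on orbit s r x"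
    proof (rule nonneg_bdd_above_summable_on)
      show "\<And>y. y \<in> orbit s r x \<Longrightarrow> 0 \<le> W y" by (simp add: W_def)
      show "bdd_above (sum W ` {F. F \<subseteq> orbit s r x \<and> finite F})"
      proof (rule bdd_aboveI[of _ "enn2real G"])
        fix t assume "t \<in> sum W ` {F. F \<subseteq> orbit s r x \<and> finite F}"
        then obtain F where F: "F \<subseteq> orbit s r x" "finite F" "t = sum W F" by blast
        have "ennreal (sum W F) = sum (\<lambda>y. ennreal (W y)) F" by (simp add: W_def)
        also have "\<dots> \<le> G" unfolding G_def by (rule fin_le_infsum[OF F(2) F(1)])
        finally have "ennreal t \<le> G" using F by simp
        then show "t \<le> enn2real G" using G
          by (metis enn2real_nonneg ennreal_enn2real ennreal_le_iff infinity_ennreal_def less_ennreal.rep_eq less_irrefl)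
      qed
    qed
  qed
  have b: "G = (SUP n. g n)"
  proof (rule antisym)
    show "G \<le> (SUP n. g n)" unfolding G_def
    proof (rule infsum_le_finite_sums)
      show "(\<lambda>y. ennreal (W y)) summable_on orbit s r x" by simp
      fix F assume F: "finite F" "F \<subseteq> orbit s r x"
      then obtain N where "F \<subseteq> Y N" using fin_Y orbit_eq by metis
      then have "sum (\<lambda>y. ennreal (W y)) F \<le> g N" unfolding gY' using F by (intro fin_le_infsum)
      also have "\<dots> \<le> (SUP n. g n)" by (rule SUP_upper) simp
      finally show "sum (\<lambda>y. ennreal (W y)) F \<le> (SUP n. g n)" .
    qed
  next
    show "(SUP n. g n) \<le> G"
    proof (rule SUP_least)
      fix n
      show "g n \<le> G" unfolding gY' G_def
        by (rule infsum_mono_neutral) (auto simp: orbit_eq)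
    qed
  qed
  have fg: "f n \<le> g n" "g n \<le> C * f n" for n using f_le_g g_le by (auto simp: f_def g_def)
  have inc: "incseq f" using f_mono by (auto simp: f_def intro: incseq_SucI)
  have lim: "f \<longlonglongrightarrow> (SUP n. f n)" using LIMSEQ_SUP[OF inc] .
  have Cfin: "C < \<infinity>" by (simp add: C_def)
  have c: "(SUP n. g n) < \<infinity> \<longleftrightarrow> (SUP n. f n) < \<infinity>"
  proof
    assume "(SUP n. g n) < \<infinity>"
    moreover have "(SUP n. f n) \<le> (SUP n. g n)" using fg by (meson SUP_mono UNIV_I)
    ultimately show "(SUP n. f n) < \<infinity>" by simp
  next
    assume fin: "(SUP n. f n) < \<infinity>"
    have "(SUP n. g n) \<le> C * (SUP n. f n)"
    proof (rule SUP_least)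
      fix n have "g n \<le> C * f n" by (rule fg)
      also have "\<dots> \<le> C * (SUP n. f n)" by (intro mult_left_mono SUP_upper) auto
      finally show "g n \<le> C * (SUP n. f n)" .
    qed
    moreover have "C * (SUP n. f n) < \<infinity>" using fin Cfin by (simp add: ennreal_mult_less_top)
    ultimately show "(SUP n. g n) < \<infinity>" by simp
  qed
  have d: "(SUP n. f n) < \<infinity> \<longleftrightarrow> (\<exists>L. f \<longlonglongrightarrow> L \<and> L < \<infinity>)"
  proof
    assume "(SUP n. f n) < \<infinity>" then show "\<exists>L. f \<longlonglongrightarrow> L \<and> L < \<infinity>" using lim by blast
  next
    assume "\<exists>L. f \<longlonglongrightarrow> L \<and> L < \<infinity>"
    then obtain L where "f \<longlonglongrightarrow> L" "L < \<infinity>" by blast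
    then show "(SUP n. f n) < \<infinity>" using LIMSEQ_unique lim by metis
  qed
  have "beta_summable s r \<beta> x \<longleftrightarrow> W summable_on orbit s r x"
    using not_evper by (simp add: beta_summable_def W_def[abs_def])
  also have "\<dots> \<longleftrightarrow> (\<exists>L. f \<longlonglongrightarrow> L \<and> L < \<infinity>)" using a b c d by simp
  finally show ?thesis unfolding f_def[abs_def] .
qed

end

theorem theorem7p6:
  fixes s r :: "'e::countable \<Rightarrow> 'v::countable"
    and xE :: "nat \<Rightarrow> 'e"
    and \<beta> :: real
  defines "S \<equiv> Vx s r xE"
  assumes ipath: "is_ipath s r xE"
    and src0: "is_source r (s (xE 0))"
    and fin_out: "\<forall>v\<in>S. finite {e \<in> sub_edges s r S. s e = v}"
    and acyc: "no_cycles_in s r S"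
    and fin_diff: "finite (S - Wx s xE)"
    and beta_neg: "\<beta> < 0"
  shows "beta_summable s r \<beta> xE \<longleftrightarrow>
    (\<exists>L. ((\<lambda>n. \<Sum>\<^sub>\<infinity>\<mu>\<in>{\<mu>. is_fpath s r \<mu> \<and> fsrc \<mu> \<in> sources_sub s r S
                                 \<and> frng r \<mu> = s (xE n)}.
               ennreal (exp (\<beta> * (real n - real (flen \<mu>))))) \<longlonglongrightarrow> L)
         \<and> L < \<infinity>)"
proof -
  interpret gr s r xE \<beta>
    using ipath acyc fin_diff beta_neg unfolding S_def by unfold_locales
  show ?thesis using main unfolding S_def SP_def wt_def by simp
qed

end
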